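(* In a finite dynamic game as described in the context, let $K=(K^i)_{i\in\mathcal{I}}$ be compressed information such that for every player $i$, $K^i$ is unilaterally sufficient information for player $i$. Then the set of payoff profiles $(J^i(\rho))_{i\in\mathcal{I}}$ attained by $K$-based Bayes–Nash equilibria $\rho$ equals the set of payoff profiles $(J^i(g))_{i\in\mathcal{I}}$ attained by all Bayes–Nash equilibria $g$ (in behavioral strategies with perfect recall).
   Context: Game model: finite set of players $\mathcal{I}$, times $\mathcal{T}=\{1,\dots,T\}$. At time $t$ each player $i$ takes action $U_t^i\in\mathcal{U}_t^i$, obtains reward $R_t^i\in[-1,1]$ and learns new information $Z_t^i\in\mathcal{Z}_t^i$. There is a state $X_t\in\mathcal{X}_t$ with $(X_{t+1},Z_t,R_t)=f_t(X_t,U_t,W_t)$ for fixed functions $f_t$. The primitive random variables are $(X_1,H_1)$ (with $H_1=(H_1^i)_i$ initial information, possibly correlated with $X_1$) and $W_1,\dots,W_T$, mutually independent with commonly known distributions. All sets $\mathcal{X}_t,\mathcal{U}_t,\mathcal{Z}_t,\mathcal{W}_t,\mathcal{H}_1$ are finite. Perfect recall: $H_t^i=(H_1^i,Z_{1:t-1}^i)\in\mathcal{H}_t^i$, and $U_t^i$ is a component of $Z_t^i$. Behavioral strategy $g^i=(g_t^i)_t$, $g_t^i:\mathcal{H}_t^i\to\Delta(\mathcal{U}_t^i)$; payoff $J^i(g)=\mathbb{E}^g[\sum_t R_t^i]$. A profile $g$ is a Bayes–Nash equilibrium (BNE) if $J^i(g)\ge J^i(\tilde g^i,g^{-i})$ for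 all $i$ and all behavioral $\tilde g^i$. A realization is admissible under $g$ if it has positive probability under $g$. Compression: $K_1^i=\iota_1^i(H_1^i)$, $K_t^i=\iota_t^i(K_{t-1}^i,Z_{t-1}^i)$ for fixed maps, values in finite $\mathcal{K}_t^i$; $k_t^i$ is the compression of $h_t^i$. A $K^i$-based strategy has $\rho_t^i:\mathcal{K}_t^i\to\Delta(\mathcal{U}_t^i)$; a $K$-based BNE is a BNE (against all full-history deviations) in which every player uses a $K^i$-based strategy. Unilaterally sufficient information (USI): $K^i$ is USI for player $i$ if there exist functions $F_t^{i,g^i}:\mathcal{K}_t^i\to\Delta(\mathcal{H}_t^i)$ depending only on $g^i$ and $\Phi_t^{i,g^{-i}}:\mathcal{K}_t^i\to\Delta(\mathcal{X}_t\times\mathcal{H}_t^{-i})$ depending only on $g^{-i}$ such that $\Pr^g(x_t,h_t\mid k_t^i)=F_t^{i,g^i}(h_t^i\mid k_t^i)\,\Phi_t^{i,g^{-i}}(x_t,h_t^{-i}\mid k_t^i)$ for all behavioral profiles $g$, all $t$ and all $k_t^i$ admissible under $g$ (here $x_t,h_t^i,h_t^{-i}$ range independently over their sets; if they disagree on shared components the left side is $0$). *)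

theory Defs
  imports "HOL-Probability.Probability"
begin

text \<open>
Types: players 'i, states 'x, actions 'u, (non-action part of)
new information 'y, noise 'w, initial private information 'h, compressed information 'k.
The new information of player i at time t is Z_t^i = (U_t^i, Y_t^i), so that the own
action is a component of Z_t^i. A local history of player i at time t is
H_t^i = (H_1^i, [Z_1^i, ..., Z_{t-1}^i]).

Game data:
  init :: ('x * ('i => 'h)) pmf     joint law of (X_1, H_1)
  W    :: nat => 'w pmf             law of W_t (W_1,...,W_T independent of each other and of (X_1,H_1))
  f    :: nat => 'x => ('i => 'u) => 'w => 'x * ('i => 'y) * ('i => real)
                                    (X_{t+1}, Y_t, R_t) = f_t(X_t, U_t, W_t)
  U    :: nat => 'i => 'u set       action sets U_t^i
  T    :: nat                       horizon
\<close>

type_synonym ('h,'u,'y) hist = "'h \<times> ('u \<times> 'y) list"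

type_synonym ('h,'u,'y) bstrat = "nat \<Rightarrow> ('h,'u,'y) hist \<Rightarrow> 'u pmf"

definition valid_strat ::
  "(nat \<Rightarrow> 'i \<Rightarrow> 'u set) \<Rightarrow> nat \<Rightarrow> 'i \<Rightarrow> ('h,'u,'y) bstrat \<Rightarrow> bool" where
  "valid_strat U T i s \<longleftrightarrow> (\<forall>t\<in>{1..T}. \<forall>hh. set_pmf (s t hh) \<subseteq> U t i)"

definition valid_profile ::
  "(nat \<Rightarrow> 'i \<Rightarrow> 'u set) \<Rightarrow> nat \<Rightarrow> ('i \<Rightarrow> ('h,'u,'y) bstrat) \<Rightarrow> bool" where
  "valid_profile U T g \<longleftrightarrow> (\<forall>i. valid_strat U T i (g i))"

definition game_step ::
  "(nat \<Rightarrow> 'w pmf) \<Rightarrow> (nat \<Rightarrow> 'x \<Rightarrow> ('i \<Rightarrow> 'u) \<Rightarrow> 'w \<Rightarrow> 'x \<times> ('i \<Rightarrow> 'y) \<times> ('i \<Rightarrow> real))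
   \<Rightarrow> ('i::finite \<Rightarrow> ('h,'u,'y) bstrat) \<Rightarrow> nat
   \<Rightarrow> 'x \<times> ('i \<Rightarrow> ('h,'u,'y) hist) \<times> ('i \<Rightarrow> real)
   \<Rightarrow> ('x \<times> ('i \<Rightarrow> ('h,'u,'y) hist) \<times> ('i \<Rightarrow> real)) pmf" where
  "game_step W f g t s =
     (case s of (x, h, r) \<Rightarrow>
        bind_pmf (Pi_pmf UNIV undefined (\<lambda>i. g i t (h i))) (\<lambda>u.
        bind_pmf (W t) (\<lambda>w.
          (case f t x u w of (x', y, rr) \<Rightarrow>
             return_pmf (x', (\<lambda>i. (fst (h i), snd (h i) @ [(u i, y i)])), (\<lambda>i. r i + rr i))))))"

text \<open>\<open>game_run init W f g n\<close> is the law of the game state at time n+1 (before acting),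
  i.e. of (X_{n+1}, H_{n+1}, R_1 + ... + R_n).\<close>
primrec game_run ::
  "('x \<times> ('i \<Rightarrow> 'h)) pmf \<Rightarrow> (nat \<Rightarrow> 'w pmf)
   \<Rightarrow> (nat \<Rightarrow> 'x \<Rightarrow> ('i \<Rightarrow> 'u) \<Rightarrow> 'w \<Rightarrow> 'x \<times> ('i \<Rightarrow> 'y) \<times> ('i \<Rightarrow> real))
   \<Rightarrow> ('i::finite \<Rightarrow> ('h,'u,'y) bstrat) \<Rightarrow> nat
   \<Rightarrow> ('x \<times> ('i \<Rightarrow> ('h,'u,'y) hist) \<times> ('i \<Rightarrow> real)) pmf" where
  "game_run init W f g 0 = map_pmf (\<lambda>(x, h1). (x, (\<lambda>i. (h1 i, [])), (\<lambda>i. 0))) init"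
| "game_run init W f g (Suc n) = bind_pmf (game_run init W f g n) (game_step W f g (Suc n))"

text \<open>Law of (X_t, H_t) at time t >= 1.\<close>
definition state_dist where
  "state_dist init W f g t = map_pmf (\<lambda>(x, h, r). (x, h)) (game_run init W f g (t - 1))"

definition payoff where
  "payoff init W f T g i = measure_pmf.expectation (game_run init W f g T) (\<lambda>(x, h, r). r i)"

definition is_BNE where
  "is_BNE init W f U T g \<longleftrightarrow> valid_profile U T g \<and>
     (\<forall>i s. valid_strat U T i s \<longrightarrow> payoff init W f T (g(i := s)) i \<le> payoff init W f T g i)"

text \<open>Compression: K_1^i = iota1 i H_1^i, K_t^i = iota t i K_{t-1}^i Z_{t-1}^i.
  \<open>kacc iota i t k zs\<close> processes Z_t, Z_{t+1}, ... starting from K_t = k.\<close>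
fun kacc :: "(nat \<Rightarrow> 'i \<Rightarrow> 'k \<Rightarrow> ('u \<times> 'y) \<Rightarrow> 'k) \<Rightarrow> 'i \<Rightarrow> nat \<Rightarrow> 'k \<Rightarrow> ('u \<times> 'y) list \<Rightarrow> 'k" where
  "kacc iota i t k [] = k"
| "kacc iota i t k (z # zs) = kacc iota i (Suc t) (iota (Suc t) i k z) zs"

definition compress ::
  "('i \<Rightarrow> 'h \<Rightarrow> 'k) \<Rightarrow> (nat \<Rightarrow> 'i \<Rightarrow> 'k \<Rightarrow> ('u \<times> 'y) \<Rightarrow> 'k) \<Rightarrow> 'i \<Rightarrow> ('h,'u,'y) hist \<Rightarrow> 'k" where
  "compress iota1 iota i hh = kacc iota i 1 (iota1 i (fst hh)) (snd hh)"

definition valid_kprofile ::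
  "(nat \<Rightarrow> 'i \<Rightarrow> 'u set) \<Rightarrow> nat \<Rightarrow> ('i \<Rightarrow> nat \<Rightarrow> 'k \<Rightarrow> 'u pmf) \<Rightarrow> bool" where
  "valid_kprofile U T rho \<longleftrightarrow> (\<forall>i. \<forall>t\<in>{1..T}. \<forall>k. set_pmf (rho i t k) \<subseteq> U t i)"

definition kinduced ::
  "('i \<Rightarrow> 'h \<Rightarrow> 'k) \<Rightarrow> (nat \<Rightarrow> 'i \<Rightarrow> 'k \<Rightarrow> ('u \<times> 'y) \<Rightarrow> 'k)
   \<Rightarrow> ('i \<Rightarrow> nat \<Rightarrow> 'k \<Rightarrow> 'u pmf) \<Rightarrow> 'i \<Rightarrow> ('h,'u,'y) bstrat" where
  "kinduced iota1 iota rho i t hh = rho i t (compress iota1 iota i hh)"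

text \<open>F depends only on g^i;
  Phi depends only on g^{-i} (it gives the same result for profiles that agree off i).
  Phi is a distribution on X_t x H_t^{-i}; the i-th component of the profile of local
  histories is masked to undefined.\<close>
definition USI ::
  "('x \<times> ('i::finite \<Rightarrow> 'h)) pmf \<Rightarrow> (nat \<Rightarrow> 'w pmf)
   \<Rightarrow> (nat \<Rightarrow> 'x \<Rightarrow> ('i \<Rightarrow> 'u) \<Rightarrow> 'w \<Rightarrow> 'x \<times> ('i \<Rightarrow> 'y) \<times> ('i \<Rightarrow> real))
   \<Rightarrow> (nat \<Rightarrow> 'i \<Rightarrow> 'u set) \<Rightarrow> nat \<Rightarrow> ('i \<Rightarrow> 'h \<Rightarrow> 'k)
   \<Rightarrow> (nat \<Rightarrow> 'i \<Rightarrow> 'k \<Rightarrow> ('u \<times> 'y) \<Rightarrow> 'k) \<Rightarrow> 'i \<Rightarrow> bool" where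
  "USI init W f U T iota1 iota i \<longleftrightarrow>
     (\<exists>(F :: ('h,'u,'y) bstrat \<Rightarrow> nat \<Rightarrow> 'k \<Rightarrow> ('h,'u,'y) hist pmf)
       (Phi :: ('i \<Rightarrow> ('h,'u,'y) bstrat) \<Rightarrow> nat \<Rightarrow> 'k \<Rightarrow> ('x \<times> ('i \<Rightarrow> ('h,'u,'y) hist)) pmf).
        (\<forall>g g'. (\<forall>j. j \<noteq> i \<longrightarrow> g j = g' j) \<longrightarrow> Phi g = Phi g') \<and>
        (\<forall>g. valid_profile U T g \<longrightarrow> (\<forall>t\<in>{1..T}. \<forall>k.
           let M = state_dist init W f g t;
               pk = measure_pmf.prob M {(x, h). compress iota1 iota i (h i) = k}
           in pk > 0 \<longrightarrow>
              (\<forall>x h. (if compress iota1 iota i (h i) = k then pmf M (x, h) else 0) / pk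
                     = pmf (F (g i) t k) (h i) * pmf (Phi g t k) (x, h(i := undefined))))))"

end

theory Submission
  imports Defs
begin


lemma indep_factor:
  fixes N :: "('x \<times> ('i \<Rightarrow> 'a)) pmf" and F :: "'a pmf" and Phi :: "('x \<times> ('i \<Rightarrow> 'a)) pmf"
  assumes fac: "\<And>x h. pmf N (x,h) = pmf F (h i) * pmf Phi (x, h(i:=c))"
  shows "map_pmf (\<lambda>(x,h). ((x,h(i:=c)), h i)) N
         = pair_pmf (map_pmf (\<lambda>(x,h). (x,h(i:=c))) N) F"
proof (rule pmf_eqI)
  fix z :: "('x \<times> ('i \<Rightarrow> 'a)) \<times> 'a"
  obtain x h0 a where z: "z = ((x,h0),a)" by (metis prod.collapse)
  have injj: "inj ((\<lambda>(x,h). ((x,h(i:=c)), h i)) :: ('x \<times> ('i \<Rightarrow> 'a)) \<Rightarrow> _)"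
    by (auto simp: inj_def fun_eq_iff split: if_splits)
  show "pmf (map_pmf (\<lambda>(x,h). ((x,h(i:=c)), h i)) N) z = pmf (pair_pmf (map_pmf (\<lambda>(x,h). (x,h(i:=c))) N) F) z"
  proof (cases "h0 i = c")
    case True
    have e1: "((x,h0),a) = (\<lambda>(x,h). ((x,h(i:=c)), h i)) (x, h0(i:=a))"
      using True by auto
    have L: "pmf (map_pmf (\<lambda>(x,h). ((x,h(i:=c)), h i)) N) z = pmf F a * pmf Phi (x,h0)"
    proof -
      have "pmf (map_pmf (\<lambda>(x,h). ((x,h(i:=c)), h i)) N) ((x,h0),a) = pmf N (x, h0(i:=a))"
      proof -
        have "pmf (map_pmf (\<lambda>(x,h). ((x,h(i:=c)), h i)) N) ((\<lambda>(x,h). ((x,h(i:=c)), h i)) (x, h0(i:=a))) = pmf N (x, h0(i:=a))"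
          by (rule pmf_map_inj'[OF injj])
        then show ?thesis unfolding e1[symmetric] .
      qed
      also have "\<dots> = pmf F a * pmf Phi (x, h0(i:=a, i:=c))" by (simp only: fac) simp
      also have "h0(i:=a, i:=c) = h0" using True by (simp add: fun_eq_iff)
      finally show ?thesis by (simp only: z)
    qed
    have pre: "(\<lambda>(x,h). (x,h(i:=c))) -` {(x,h0)} = (\<lambda>v. (x, h0(i:=v))) ` UNIV"
    proof (intro set_eqI iffI)
      fix s assume "s \<in> (\<lambda>(x,h). (x,h(i:=c))) -` {(x,h0)}"
      then obtain h where s: "s = (x,h)" and hh: "h(i:=c) = h0" by (cases s) auto
      have "h0(i := h i) = h" unfolding hh[symmetric] by simp
      then show "s \<in> (\<lambda>v. (x, h0(i:=v))) ` UNIV" using s by (metis rangeI)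
    next
      fix s assume "s \<in> (\<lambda>v. (x, h0(i:=v))) ` UNIV"
      then obtain v where "s = (x, h0(i:=v))" by auto
      then show "s \<in> (\<lambda>(x,h). (x,h(i:=c))) -` {(x,h0)}" using True by (simp add: fun_upd_idem)
    qed
    have "pmf (map_pmf (\<lambda>(x,h). (x,h(i:=c))) N) (x,h0) = infsetsum (pmf N) ((\<lambda>v. (x, h0(i:=v))) ` UNIV)"
      by (simp add: pmf_map measure_pmf_conv_infsetsum pre)
    also have "\<dots> = infsetsum (\<lambda>v. pmf N (x, h0(i:=v))) UNIV"
      by (rule infsetsum_reindex_bij_betw[symmetric, where f="pmf N"]) (auto simp: bij_betw_def inj_def fun_eq_iff) 
    also have "\<dots> = infsetsum (\<lambda>v. pmf F v * pmf Phi (x,h0)) UNIV"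
      by (simp add: fac fun_upd_idem[of h0 i c, OF True])
    also have "\<dots> = pmf Phi (x,h0)"
      by (subst infsetsum_cmult_left) (auto simp: infsetsum_pmf_eq_1)
    finally show ?thesis using L by (simp add: z pmf_pair)
  next
    case False
    have "pmf (map_pmf (\<lambda>(x,h). ((x,h(i:=c)), h i)) N) z = 0"
      by (rule pmf_map_outside) (use False in \<open>auto simp: z\<close>)
    moreover have "pmf (map_pmf (\<lambda>(x,h). (x,h(i:=c))) N) (x,h0) = 0"
      by (rule pmf_map_outside) (use False in auto)
    ultimately show ?thesis by (simp add: z pmf_pair)
  qed
qed

lemma key_lemma:
  fixes M :: "('x \<times> ('i \<Rightarrow> 'a)) pmf" and K :: "'a \<Rightarrow> 'k" and F :: "'k \<Rightarrow> 'a pmf"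
    and Phi :: "'k \<Rightarrow> ('x \<times> ('i \<Rightarrow> 'a)) pmf" and G :: "'a \<Rightarrow> 'u pmf"
    and Q :: "'x \<times> ('i \<Rightarrow> 'a) \<times> 'k \<Rightarrow> 'u \<Rightarrow> 'z pmf"
  assumes usi: "\<And>k. measure_pmf.prob M {(x,h). K (h i) = k} > 0 \<Longrightarrow>
     (\<forall>x h. (if K (h i) = k then pmf M (x,h) else 0) / measure_pmf.prob M {(x,h). K (h i) = k}
         = pmf (F k) (h i) * pmf (Phi k) (x, h(i:=c)))"
  shows "bind_pmf M (\<lambda>(x,h). bind_pmf (G (h i)) (Q (x, h(i:=c), K (h i))))
       = bind_pmf M (\<lambda>(x,h). bind_pmf (bind_pmf (F (K (h i))) G) (Q (x, h(i:=c), K (h i))))"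
proof -
  define K' where "K' = (\<lambda>s::'x \<times> ('i \<Rightarrow> 'a). K (snd s i))"
  have Aeq: "\<And>k. {(x,h). K (h i) = k} = {y. K' y = k}" by (auto simp: K'_def)
  have dec: "M = bind_pmf (map_pmf K' M) (\<lambda>k. cond_pmf M {y. K' y = k})"
    by (rule bind_cond_pmf_cancel[symmetric]) (auto simp: vimage_def)
  define k1 where "k1 = (\<lambda>(x,h). bind_pmf (G (h i)) (Q (x, h(i:=c), K (h i))))"
  define k2 where "k2 = (\<lambda>(x,h). bind_pmf (bind_pmf (F (K (h i))) G) (Q (x, h(i:=c), K (h i))))"
  have "bind_pmf (cond_pmf M {y. K' y = k}) k1 = bind_pmf (cond_pmf M {y. K' y = k}) k2"
    if k: "k \<in> set_pmf (map_pmf K' M)" for k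
  proof -
    let ?A = "{y. K' y = k}"
    define N where "N = cond_pmf M ?A"
    have ne: "set_pmf M \<inter> ?A \<noteq> {}" using k by auto
    have pos: "measure_pmf.prob M ?A > 0" using ne by (auto intro: measure_pmf_posI)
    note fac0 = usi[of k, unfolded Aeq, OF pos]
    have fac: "pmf N (x,h) = pmf (F k) (h i) * pmf (Phi k) (x, h(i:=c))" for x h
      using spec[OF spec[OF fac0, of x], of h] unfolding N_def pmf_cond[OF ne] by (auto simp: K'_def)
    have ind: "map_pmf (\<lambda>(x,h). ((x,h(i:=c)), h i)) N
         = pair_pmf (map_pmf (\<lambda>(x,h). (x,h(i:=c))) N) (F k)"
      by (rule indep_factor) (rule fac)
    define Phi2 where "Phi2 = map_pmf (\<lambda>(x,h). (x,h(i:=c))) N"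
    have setN: "\<And>s. s \<in> set_pmf N \<Longrightarrow> K' s = k" unfolding N_def using ne by auto
    have "bind_pmf N k1 = bind_pmf N (\<lambda>(x,h). bind_pmf (G (h i)) (Q (x, h(i:=c), k)))"
      by (rule bind_pmf_cong) (auto simp: k1_def dest!: setN simp: K'_def)
    also have "\<dots> = bind_pmf (map_pmf (\<lambda>(x,h). ((x,h(i:=c)), h i)) N) (\<lambda>(p,a). bind_pmf (G a) (Q (fst p, snd p, k)))"
      by (simp add: bind_map_pmf case_prod_beta')
    also have "\<dots> = bind_pmf Phi2 (\<lambda>p. bind_pmf (bind_pmf (F k) G) (Q (fst p, snd p, k)))"
      unfolding ind Phi2_def[symmetric] pair_pmf_def
      by (simp add: bind_assoc_pmf bind_return_pmf)
    finally have L: "bind_pmf N k1 = bind_pmf Phi2 (\<lambda>p. bind_pmf (bind_pmf (F k) G) (Q (fst p, snd p, k)))" .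
    have "bind_pmf N k2 = bind_pmf N (\<lambda>(x,h). bind_pmf (bind_pmf (F k) G) (Q (x, h(i:=c), k)))"
      by (rule bind_pmf_cong) (auto simp: k2_def dest!: setN simp: K'_def)
    also have "\<dots> = bind_pmf (map_pmf (\<lambda>(x,h). ((x,h(i:=c)), h i)) N) (\<lambda>(p,a). bind_pmf (bind_pmf (F k) G) (Q (fst p, snd p, k)))"
      by (simp add: bind_map_pmf case_prod_beta')
    also have "\<dots> = bind_pmf Phi2 (\<lambda>p. bind_pmf (bind_pmf (F k) G) (Q (fst p, snd p, k)))"
      unfolding ind Phi2_def[symmetric] pair_pmf_def
      by (simp add: bind_assoc_pmf bind_return_pmf bind_pmf_const)
    finally show ?thesis using L by (simp add: N_def)
  qed
  note kk = this
  have kb: "bind_pmf (map_pmf K' M) (\<lambda>k. bind_pmf (cond_pmf M {y. K' y = k}) k1)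
           = bind_pmf (map_pmf K' M) (\<lambda>k. bind_pmf (cond_pmf M {y. K' y = k}) k2)"
    by (rule bind_pmf_cong[OF refl kk])
  have e: "bind_pmf M \<kappa> = bind_pmf (map_pmf K' M) (\<lambda>k. bind_pmf (cond_pmf M {y. K' y = k}) \<kappa>)"
    for \<kappa> :: "_ \<Rightarrow> 'z pmf"
    using arg_cong[OF dec, of "\<lambda>m. bind_pmf m \<kappa>"] by (simp only: bind_assoc_pmf)
  have "bind_pmf M k1 = bind_pmf M k2" unfolding e[of k1] e[of k2] by (rule kb)
  then show ?thesis unfolding k1_def k2_def .
qed



lemma kacc_snoc: "kacc iota i t k (zs @ [z]) = iota (t + length zs + 1) i (kacc iota i t k zs) z"
  by (induction zs arbitrary: t k) auto

lemma compress_snoc: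
  "compress iota1 iota i (a, zs @ [z]) = iota (length zs + 2) i (compress iota1 iota i (a, zs)) z"
  by (simp add: compress_def kacc_snoc)

context
  fixes init :: "('x::finite \<times> ('i::finite \<Rightarrow> 'h::finite)) pmf"
    and W :: "nat \<Rightarrow> 'w::finite pmf"
    and f :: "nat \<Rightarrow> 'x \<Rightarrow> ('i \<Rightarrow> 'u::finite) \<Rightarrow> 'w \<Rightarrow> 'x \<times> ('i \<Rightarrow> 'y::finite) \<times> ('i \<Rightarrow> real)"
    and iota1 :: "'i \<Rightarrow> 'h \<Rightarrow> 'k::finite"
    and iota :: "nat \<Rightarrow> 'i \<Rightarrow> 'k \<Rightarrow> ('u \<times> 'y) \<Rightarrow> 'k"
begin

definition stout :: "nat \<Rightarrow> 'x \<Rightarrow> ('i \<Rightarrow> ('h,'u,'y) hist) \<Rightarrow> ('i \<Rightarrow> 'u) \<Rightarrow> 'w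
    \<Rightarrow> 'x \<times> ('i \<Rightarrow> ('h,'u,'y) hist) \<times> ('i \<Rightarrow> real)" where
  "stout t x h u w = (case f t x u w of (x', y, rr) \<Rightarrow> (x', (\<lambda>j. (fst (h j), snd (h j) @ [(u j, y j)])), rr))"

definition stepxh :: "('i \<Rightarrow> ('h,'u,'y) bstrat) \<Rightarrow> nat \<Rightarrow> 'x \<Rightarrow> ('i \<Rightarrow> ('h,'u,'y) hist)
    \<Rightarrow> ('x \<times> ('i \<Rightarrow> ('h,'u,'y) hist) \<times> ('i \<Rightarrow> real)) pmf" where
  "stepxh g t x h = bind_pmf (Pi_pmf UNIV undefined (\<lambda>j. g j t (h j))) (\<lambda>u. bind_pmf (W t) (\<lambda>w.
     return_pmf (stout t x h u w)))"

lemma game_step_eq: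
  "game_step W f g t (x,h,r) = map_pmf (\<lambda>(x',h',rr). (x',h',\<lambda>j. r j + rr j)) (stepxh g t x h)"
  unfolding game_step_def stepxh_def map_bind_pmf map_return_pmf prod.case
  by (intro bind_pmf_cong refl) (simp add: stout_def split: prod.split)

lemma finite_stepxh: "finite (set_pmf (stepxh g t x h))"
proof -
  have "set_pmf (stepxh g t x h) \<subseteq> range (\<lambda>p. stout t x h (fst p) (snd p))"
  proof
    fix s assume "s \<in> set_pmf (stepxh g t x h)"
    then obtain u w where "s = stout t x h u w" by (auto simp: stepxh_def)
    then have "s = (\<lambda>p. stout t x h (fst p) (snd p)) (u,w)" by simp
    then show "s \<in> range (\<lambda>p. stout t x h (fst p) (snd p))" by (rule range_eqI)
  qed
  moreover have "finite (range (\<lambda>p::('i \<Rightarrow> 'u) \<times> 'w. stout t x h (fst p) (snd p)))"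
    by (rule finite_imageI) simp
  ultimately show ?thesis by (rule finite_subset)
qed

lemma finite_game_step: "finite (set_pmf (game_step W f g t s))"
  for g :: "'i \<Rightarrow> ('h,'u,'y) bstrat" and s :: "'x \<times> ('i \<Rightarrow> ('h,'u,'y) hist) \<times> ('i \<Rightarrow> real)"
proof -
  obtain a b c where "s = (a,b,c)" by (cases s)
  then show ?thesis using finite_stepxh[of g t a b] by (simp add: game_step_eq)
qed

lemma finite_game_run: "finite (set_pmf (game_run init W f g n))"
  by (induction n) (auto simp: finite_game_step)

lemma length_game_run: "(x,h,r) \<in> set_pmf (game_run init W f g n) \<Longrightarrow> length (snd (h j)) = n"
proof (induction n arbitrary: x h r)
  case 0 then show ?case by auto
next
  case (Suc n)
  then obtain x0 h0 r0 where s0: "(x0,h0,r0) \<in> set_pmf (game_run init W f g n)"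
     and "(x,h,r) \<in> set_pmf (game_step W f g (Suc n) (x0,h0,r0))" by auto
  then have "(x,h,r) \<in> set_pmf (map_pmf (\<lambda>(x',h',rr). (x',h',\<lambda>j. r0 j + rr j)) (stepxh g (Suc n) x0 h0))"
    by (simp only: game_step_eq)
  then obtain u y where "h = (\<lambda>j. (fst (h0 j), snd (h0 j) @ [(u j, y j)]))"
    by (auto simp: stepxh_def stout_def split: prod.splits)
  then show ?case using Suc.IH[OF s0] by simp
qed

definition proj :: "'i \<Rightarrow> 'x \<times> ('i \<Rightarrow> ('h,'u,'y) hist) \<Rightarrow> 'x \<times> ('i \<Rightarrow> ('h,'u,'y) hist) \<times> 'k" where
  "proj i s = (fst s, (snd s)(i:=undefined), compress iota1 iota i (snd s i))"

definition projR where "projR i s = (proj i (fst s, fst (snd s)), snd (snd s))"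

definition Qfun :: "('i \<Rightarrow> ('h,'u,'y) bstrat) \<Rightarrow> 'i \<Rightarrow> nat \<Rightarrow> 'x \<times> ('i \<Rightarrow> ('h,'u,'y) hist) \<times> 'k \<Rightarrow> 'u
   \<Rightarrow> (('x \<times> ('i \<Rightarrow> ('h,'u,'y) hist) \<times> 'k) \<times> ('i \<Rightarrow> real)) pmf" where
  "Qfun g i t p a = (case p of (x, h0, k) \<Rightarrow>
     bind_pmf (Pi_pmf (UNIV - {i}) undefined (\<lambda>j. g j t (h0 j))) (\<lambda>v. bind_pmf (W t) (\<lambda>w.
       return_pmf (case f t x (v(i:=a)) w of (x', y, rr) \<Rightarrow>
         ((x', (\<lambda>j. (fst (h0 j), snd (h0 j) @ [((v(i:=a)) j, y j)]))(i:=undefined),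
                      iota (Suc t) i k (a, y i)), rr)))))"

lemma Qfun_upd: "Qfun (g(i:=s)) i = Qfun g i"
proof -
  have cong: "Pi_pmf (UNIV-{i}) undefined (\<lambda>j. (g(i:=s)) j t (h0 j)) = Pi_pmf (UNIV-{i}) undefined (\<lambda>j. g j t (h0 j))"
    for t h0 by (rule Pi_pmf_cong) auto
  show ?thesis unfolding Qfun_def by (simp only: cong)
qed

lemma stepsplit:
  assumes len: "length (snd (h i)) = t - 1" and t: "1 \<le> t"
  shows "map_pmf (projR i) (stepxh g t x h) = bind_pmf (g i t (h i)) (Qfun g i t (proj i (x,h)))"
proof -
  have U: "(UNIV :: 'i set) = insert i (UNIV - {i})" by auto
  have Pi: "Pi_pmf UNIV undefined (\<lambda>j. g j t (h j)) =
     bind_pmf (g i t (h i)) (\<lambda>a. bind_pmf (Pi_pmf (UNIV - {i}) undefined (\<lambda>j. g j t ((h(i:=undefined)) j)))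
        (\<lambda>v. return_pmf (v(i:=a))))"
  proof -
    have ins: "Pi_pmf UNIV undefined p = bind_pmf (p i) (\<lambda>y. bind_pmf (Pi_pmf (UNIV-{i}) undefined p) (\<lambda>f. return_pmf (f(i:=y))))"
      for p :: "'i \<Rightarrow> 'u pmf"
      using Pi_pmf_insert'[of "UNIV - {i}" i undefined p] by simp
    have cong: "Pi_pmf (UNIV-{i}) undefined (\<lambda>j. g j t (h j)) = Pi_pmf (UNIV-{i}) undefined (\<lambda>j. g j t ((h(i:=undefined)) j))"
      by (rule Pi_pmf_cong) auto
    show ?thesis by (simp only: ins cong)
  qed
  have e: "Suc t = length (snd (h i)) + 2" using len t by simp
  have pt: "projR i (stout t x h (v(i:=a)) w) = (case f t x (v(i:=a)) w of (x',y,rr) \<Rightarrow>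
      ((x', (\<lambda>j. (fst ((h(i:=undefined)) j), snd ((h(i:=undefined)) j) @ [((v(i:=a)) j, y j)]))(i:=undefined),
        iota (Suc t) i (compress iota1 iota i (h i)) (a, y i)), rr))" for v a w
  proof (cases "f t x (v(i:=a)) w")
    case (fields x' y rr)
    have c: "compress iota1 iota i (fst (h i), snd (h i) @ [(a, y i)]) = iota (Suc t) i (compress iota1 iota i (h i)) (a, y i)"
      using compress_snoc[of iota1 iota i "fst (h i)" "snd (h i)" "(a, y i)"] e by simp
    show ?thesis using fields c by (simp add: projR_def proj_def stout_def fun_eq_iff)
  qed
  have "map_pmf (projR i) (stepxh g t x h) = bind_pmf (g i t (h i)) (\<lambda>a.
      bind_pmf (Pi_pmf (UNIV - {i}) undefined (\<lambda>j. g j t ((h(i:=undefined)) j))) (\<lambda>v.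
        bind_pmf (W t) (\<lambda>w. return_pmf (projR i (stout t x h (v(i:=a)) w)))))"
    unfolding stepxh_def Pi by (simp add: map_bind_pmf bind_assoc_pmf bind_return_pmf)
  also have "\<dots> = bind_pmf (g i t (h i)) (Qfun g i t (proj i (x,h)))"
    unfolding pt Qfun_def proj_def by simp
  finally show ?thesis .
qed


definition PP where "PP g i n = map_pmf (\<lambda>(x,h,r). proj i (x,h)) (game_run init W f g n)"
definition JJ where "JJ g i t = bind_pmf (game_run init W f g (t-1)) (\<lambda>(x,h,r). map_pmf (projR i) (stepxh g t x h))"

lemma PP_Suc: "PP g i (Suc n) = map_pmf fst (JJ g i (Suc n))"
proof -
  have "map_pmf (\<lambda>(x,h,r). proj i (x,h)) (game_step W f g (Suc n) s)
      = map_pmf fst ((\<lambda>(x,h,r). map_pmf (projR i) (stepxh g (Suc n) x h)) s)" for s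
    by (cases s) (simp add: game_step_eq pmf.map_comp o_def projR_def case_prod_beta)
  then show ?thesis by (simp add: PP_def JJ_def map_bind_pmf)
qed

lemma exp_bind:
  fixes p :: "'a pmf" and q :: "'a \<Rightarrow> 'b pmf" and phi :: "'b \<Rightarrow> real"
  assumes "finite (set_pmf p)" "\<And>x. x \<in> set_pmf p \<Longrightarrow> finite (set_pmf (q x))"
  shows "measure_pmf.expectation (bind_pmf p q) phi = measure_pmf.expectation p (\<lambda>x. measure_pmf.expectation (q x) phi)"
  using pmf_expectation_bind[of "set_pmf p" q p phi] integral_measure_pmf[of "set_pmf p" p "\<lambda>x. measure_pmf.expectation (q x) phi"]
    assms by simp

lemma finite_JJ: "x \<in> set_pmf (game_run init W f g n) \<Longrightarrow> finite (set_pmf ((\<lambda>(x,h,r). map_pmf (projR i) (stepxh g t x h)) x))"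
  by (auto simp: finite_stepxh split: prod.split)

lemma exp_Suc:
  "measure_pmf.expectation (game_run init W f g (Suc n)) (\<lambda>(x,h,r). r j)
   = measure_pmf.expectation (game_run init W f g n) (\<lambda>(x,h,r). r j)
     + measure_pmf.expectation (JJ g i (Suc n)) (\<lambda>(p,rr). rr j)"
proof -
  let ?G = "game_run init W f g n"
  have fin: "finite (set_pmf ?G)" by (rule finite_game_run)
  have st: "measure_pmf.expectation (game_step W f g (Suc n) s) (\<lambda>(x,h,r). r j)
      = (\<lambda>(x,h,r). r j) s + (\<lambda>(x,h,r). measure_pmf.expectation (stepxh g (Suc n) x h) (\<lambda>(x',h',rr). rr j)) s" for s
  proof (cases s)
    case (fields x h r)
    have "measure_pmf.expectation (game_step W f g (Suc n) s) (\<lambda>(x,h,r). r j)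
        = measure_pmf.expectation (stepxh g (Suc n) x h) (\<lambda>s'. r j + (\<lambda>(x',h',rr). rr j) s')"
      by (simp add: fields game_step_eq case_prod_beta)
    also have "\<dots> = measure_pmf.expectation (stepxh g (Suc n) x h) (\<lambda>s'. r j)
         + measure_pmf.expectation (stepxh g (Suc n) x h) (\<lambda>(x',h',rr). rr j)"
      by (rule Bochner_Integration.integral_add) (auto intro: integrable_measure_pmf_finite finite_stepxh)
    finally show ?thesis by (simp add: fields)
  qed
  have "measure_pmf.expectation (game_run init W f g (Suc n)) (\<lambda>(x,h,r). r j)
      = measure_pmf.expectation ?G (\<lambda>s. measure_pmf.expectation (game_step W f g (Suc n) s) (\<lambda>(x,h,r). r j))"
    by (simp only: game_run.simps) (rule exp_bind[OF fin finite_game_step])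
  also have "\<dots> = measure_pmf.expectation ?G (\<lambda>s. (\<lambda>(x,h,r). r j) s + (\<lambda>(x,h,r). measure_pmf.expectation (stepxh g (Suc n) x h) (\<lambda>(x',h',rr). rr j)) s)"
    by (simp only: st)
  also have "\<dots> = measure_pmf.expectation ?G (\<lambda>(x,h,r). r j) + measure_pmf.expectation ?G (\<lambda>(x,h,r). measure_pmf.expectation (stepxh g (Suc n) x h) (\<lambda>(x',h',rr). rr j))"
    by (rule Bochner_Integration.integral_add) (auto intro: integrable_measure_pmf_finite fin)
  also have "measure_pmf.expectation ?G (\<lambda>(x,h,r). measure_pmf.expectation (stepxh g (Suc n) x h) (\<lambda>(x',h',rr). rr j))
      = measure_pmf.expectation (JJ g i (Suc n)) (\<lambda>(p,rr). rr j)"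
    unfolding JJ_def
    by (subst exp_bind[OF _ finite_JJ]) (auto simp: fin projR_def case_prod_beta intro!: Bochner_Integration.integral_cong)
  finally show ?thesis .
qed

lemma replace_aux:
  fixes FF :: "nat \<Rightarrow> 'k \<Rightarrow> ('h,'u,'y) hist pmf" and PH :: "nat \<Rightarrow> 'k \<Rightarrow> ('x \<times> ('i \<Rightarrow> ('h,'u,'y) hist)) pmf"
  assumes fac: "\<forall>t\<in>{1..T}. \<forall>k. let M = state_dist init W f g t;
               pk = measure_pmf.prob M {(x, h). compress iota1 iota i (h i) = k}
           in pk > 0 \<longrightarrow>
              (\<forall>x h. (if compress iota1 iota i (h i) = k then pmf M (x, h) else 0) / pk
                     = pmf (FF t k) (h i) * pmf (PH t k) (x, h(i := undefined)))"
  assumes g': "g' = g(i := (\<lambda>t hh. bind_pmf (FF t (compress iota1 iota i hh)) (g i t)))"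
  shows "n \<le> T \<Longrightarrow> PP g' i n = PP g i n \<and>
     (\<forall>j. measure_pmf.expectation (game_run init W f g' n) (\<lambda>(x,h,r). r j)
        = measure_pmf.expectation (game_run init W f g n) (\<lambda>(x,h,r). r j))"
proof (induction n)
  case 0
  then show ?case by (simp add: PP_def)
next
  case (Suc n)
  then have IH: "PP g' i n = PP g i n" by simp
  from Suc have IHe: "\<And>j. measure_pmf.expectation (game_run init W f g' n) (\<lambda>(x,h,r). r j)
        = measure_pmf.expectation (game_run init W f g n) (\<lambda>(x,h,r). r j)" by simp
  define t where "t = Suc n"
  have tT: "t \<in> {1..T}" using Suc.prems by (simp add: t_def)
  define Z where "Z = (\<lambda>(x::'x, h0::'i \<Rightarrow> ('h,'u,'y) hist, k::'k). bind_pmf (bind_pmf (FF t k) (g i t)) (Qfun g i t (x,h0,k)))"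
  have J1: "JJ g i t = bind_pmf (PP g i n) Z"
  proof -
    have "JJ g i t = bind_pmf (game_run init W f g n) (\<lambda>(x,h,r). bind_pmf (g i t (h i)) (Qfun g i t (proj i (x,h))))"
      unfolding JJ_def t_def
      by (intro bind_pmf_cong refl) (auto intro!: stepsplit dest: length_game_run)
    also have "\<dots> = bind_pmf (state_dist init W f g t) (\<lambda>(x,h). bind_pmf (g i t (h i)) (Qfun g i t (x, h(i:=undefined), compress iota1 iota i (h i))))"
      unfolding state_dist_def t_def bind_map_pmf
      by (intro bind_pmf_cong refl) (auto simp: proj_def)
    also have "\<dots> = bind_pmf (state_dist init W f g t) (\<lambda>(x,h). bind_pmf (bind_pmf (FF t (compress iota1 iota i (h i))) (g i t)) (Qfun g i t (x, h(i:=undefined), compress iota1 iota i (h i))))"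
    proof (rule key_lemma)
      fix k
      assume "measure_pmf.prob (state_dist init W f g t) {(x, h). compress iota1 iota i (h i) = k} > 0"
      then show "\<forall>x h. (if compress iota1 iota i (h i) = k then pmf (state_dist init W f g t) (x, h) else 0) /
             measure_pmf.prob (state_dist init W f g t) {(x, h). compress iota1 iota i (h i) = k} =
             pmf (FF t k) (h i) * pmf (PH t k) (x, h(i := undefined))"
        using fac tT by (auto simp: Let_def)
    qed
    also have "\<dots> = bind_pmf (PP g i n) Z"
      by (simp add: state_dist_def t_def PP_def bind_map_pmf case_prod_beta proj_def Z_def)
    finally show ?thesis .
  qed
  have J2: "JJ g' i t = bind_pmf (PP g' i n) Z"
  proof -
    have "JJ g' i t = bind_pmf (game_run init W f g' n) (\<lambda>(x,h,r). bind_pmf (g' i t (h i)) (Qfun g' i t (proj i (x,h))))"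
      unfolding JJ_def t_def
      by (intro bind_pmf_cong refl) (auto intro!: stepsplit dest: length_game_run)
    also have "\<dots> = bind_pmf (PP g' i n) Z"
      unfolding PP_def bind_map_pmf
      by (intro bind_pmf_cong refl) (auto simp: g' Qfun_upd t_def proj_def Z_def)
    finally show ?thesis .
  qed
  have JJeq: "JJ g' i t = JJ g i t" using J1 J2 IH by simp
  show ?case
  proof
    show "PP g' i (Suc n) = PP g i (Suc n)" using JJeq by (simp add: PP_Suc t_def)
    show "\<forall>j. measure_pmf.expectation (game_run init W f g' (Suc n)) (\<lambda>(x,h,r). r j)
        = measure_pmf.expectation (game_run init W f g (Suc n)) (\<lambda>(x,h,r). r j)"
    proof
      fix j
      show "measure_pmf.expectation (game_run init W f g' (Suc n)) (\<lambda>(x,h,r). r j)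
        = measure_pmf.expectation (game_run init W f g (Suc n)) (\<lambda>(x,h,r). r j)"
        unfolding exp_Suc[where i=i and g=g' and j=j] exp_Suc[where i=i and g=g and j=j]
        using JJeq IHe[of j] by (simp only: t_def)
    qed
  qed
qed
end

definition USIprop where
  "USIprop init W f U T iota1 iota i F Phi \<longleftrightarrow>
        (\<forall>g g'. (\<forall>j. j \<noteq> i \<longrightarrow> g j = g' j) \<longrightarrow> Phi g = Phi g') \<and>
        (\<forall>g. valid_profile U T g \<longrightarrow> (\<forall>t\<in>{1..T}. \<forall>k.
           let M = state_dist init W f g t;
               pk = measure_pmf.prob M {(x, h). compress iota1 iota i (h i) = k}
           in pk > 0 \<longrightarrow>
              (\<forall>x h. (if compress iota1 iota i (h i) = k then pmf M (x, h) else 0) / pk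
                     = pmf (F (g i) t k) (h i) * pmf (Phi g t k) (x, h(i := undefined)))))"

definition Fsel where
  "Fsel init W f U T iota1 iota i = (SOME F. \<exists>Phi. USIprop init W f U T iota1 iota i F Phi)"

definition sig where
  "sig init W f U T iota1 iota g j = (\<lambda>t hh. bind_pmf (Fsel init W f U T iota1 iota j (g j) t (compress iota1 iota j hh)) (g j t))"

lemma payoff_replace:
  fixes init :: "('x::finite \<times> ('i::finite \<Rightarrow> 'h::finite)) pmf"
    and W :: "nat \<Rightarrow> 'w::finite pmf"
    and f :: "nat \<Rightarrow> 'x \<Rightarrow> ('i \<Rightarrow> 'u::finite) \<Rightarrow> 'w \<Rightarrow> 'x \<times> ('i \<Rightarrow> 'y::finite) \<times> ('i \<Rightarrow> real)"
    and U :: "nat \<Rightarrow> 'i \<Rightarrow> 'u set"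
    and T :: nat
    and iota1 :: "'i \<Rightarrow> 'h \<Rightarrow> 'k::finite"
    and iota :: "nat \<Rightarrow> 'i \<Rightarrow> 'k \<Rightarrow> ('u \<times> 'y) \<Rightarrow> 'k"
  assumes usi: "USI init W f U T iota1 iota i" and vg: "valid_profile U T g"
  shows "payoff init W f T (g(i := sig init W f U T iota1 iota g i)) j = payoff init W f T g j"
proof -
  have "\<exists>F Phi. USIprop init W f U T iota1 iota i F Phi"
    using usi unfolding USI_def USIprop_def by blast
  then have "\<exists>Phi. USIprop init W f U T iota1 iota i (Fsel init W f U T iota1 iota i) Phi"
    unfolding Fsel_def by (rule someI_ex[where P="\<lambda>F. \<exists>Phi. USIprop init W f U T iota1 iota i F Phi", OF exE]) blast+
  then obtain Phi where P: "USIprop init W f U T iota1 iota i (Fsel init W f U T iota1 iota i) Phi" by blast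
  have fac: "\<forall>t\<in>{1..T}. \<forall>k. let M = state_dist init W f g t;
               pk = measure_pmf.prob M {(x, h). compress iota1 iota i (h i) = k}
           in pk > 0 \<longrightarrow>
              (\<forall>x h. (if compress iota1 iota i (h i) = k then pmf M (x, h) else 0) / pk
                     = pmf (Fsel init W f U T iota1 iota i (g i) t k) (h i) * pmf (Phi g t k) (x, h(i := undefined)))"
    using P vg unfolding USIprop_def by blast
  have "measure_pmf.expectation (game_run init W f (g(i := sig init W f U T iota1 iota g i)) T) (\<lambda>(x,h,r). r j)
      = measure_pmf.expectation (game_run init W f g T) (\<lambda>(x,h,r). r j)"
    using replace_aux[OF fac, of "g(i := sig init W f U T iota1 iota g i)" T] by (simp add: sig_def)
  then show ?thesis by (simp add: payoff_def)
qed


lemma valid_sig: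
  assumes "valid_profile U T g"
  shows "valid_strat U T j (sig init W f U T iota1 iota g j)"
  using assms unfolding valid_profile_def valid_strat_def sig_def by fastforce

lemma payoff_multi:
  fixes init :: "('x::finite \<times> ('i::finite \<Rightarrow> 'h::finite)) pmf"
    and W :: "nat \<Rightarrow> 'w::finite pmf"
    and f :: "nat \<Rightarrow> 'x \<Rightarrow> ('i \<Rightarrow> 'u::finite) \<Rightarrow> 'w \<Rightarrow> 'x \<times> ('i \<Rightarrow> 'y::finite) \<times> ('i \<Rightarrow> real)"
    and U :: "nat \<Rightarrow> 'i \<Rightarrow> 'u set"
    and T :: nat
    and iota1 :: "'i \<Rightarrow> 'h \<Rightarrow> 'k::finite"
    and iota :: "nat \<Rightarrow> 'i \<Rightarrow> 'k \<Rightarrow> ('u \<times> 'y) \<Rightarrow> 'k"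
  assumes usi: "\<forall>i. USI init W f U T iota1 iota i" and vp: "valid_profile U T p"
  shows "finite S \<Longrightarrow> payoff init W f T (\<lambda>j. if j \<in> S then sig init W f U T iota1 iota p j else p j) m
           = payoff init W f T p m"
proof (induction S rule: finite_induct)
  case empty
  then show ?case by simp
next
  case (insert a S)
  define q where "q = (\<lambda>j. if j \<in> S then sig init W f U T iota1 iota p j else p j)"
  have vq: "valid_profile U T q"
    using vp valid_sig[OF vp] unfolding q_def valid_profile_def by auto
  have qa: "q a = p a" using insert.hyps by (simp add: q_def)
  have "sig init W f U T iota1 iota q a = sig init W f U T iota1 iota p a"
    by (simp add: sig_def qa)
  then have "q(a := sig init W f U T iota1 iota q a) = (\<lambda>j. if j \<in> insert a S then sig init W f U T iota1 iota p j else p j)"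
    by (auto simp: q_def fun_eq_iff)
  then have "payoff init W f T (\<lambda>j. if j \<in> insert a S then sig init W f U T iota1 iota p j else p j) m
      = payoff init W f T q m"
    using payoff_replace[OF usi[rule_format, of a] vq, of m] by simp
  also have "\<dots> = payoff init W f T p m" using insert.IH by (simp add: q_def)
  finally show ?case .
qed

theorem theorem2:
  fixes init :: "('x::finite \<times> ('i::finite \<Rightarrow> 'h::finite)) pmf"
    and W :: "nat \<Rightarrow> 'w::finite pmf"
    and f :: "nat \<Rightarrow> 'x \<Rightarrow> ('i \<Rightarrow> 'u::finite) \<Rightarrow> 'w \<Rightarrow> 'x \<times> ('i \<Rightarrow> 'y::finite) \<times> ('i \<Rightarrow> real)"
    and U :: "nat \<Rightarrow> 'i \<Rightarrow> 'u set"
    and T :: nat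
    and iota1 :: "'i \<Rightarrow> 'h \<Rightarrow> 'k::finite"
    and iota :: "nat \<Rightarrow> 'i \<Rightarrow> 'k \<Rightarrow> ('u \<times> 'y) \<Rightarrow> 'k"
  assumes rewards: "\<forall>t\<in>{1..T}. \<forall>x u w i. \<bar>snd (snd (f t x u w)) i\<bar> \<le> 1"
    and usi: "\<forall>i. USI init W f U T iota1 iota i"
  shows "{(\<lambda>i. payoff init W f T (kinduced iota1 iota rho) i) | rho.
            valid_kprofile U T rho \<and> is_BNE init W f U T (kinduced iota1 iota rho)}
       = {(\<lambda>i. payoff init W f T g i) | g. is_BNE init W f U T g}"
proof (intro equalityI subsetI)
  fix v assume "v \<in> {(\<lambda>i. payoff init W f T (kinduced iota1 iota rho) i) | rho.
            valid_kprofile U T rho \<and> is_BNE init W f U T (kinduced iota1 iota rho)}"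
  then show "v \<in> {(\<lambda>i. payoff init W f T g i) | g. is_BNE init W f U T g}" by blast
next
  fix v assume "v \<in> {(\<lambda>i. payoff init W f T g i) | g. is_BNE init W f U T g}"
  then obtain g where v: "v = (\<lambda>i. payoff init W f T g i)" and bne: "is_BNE init W f U T g" by blast
  have vg: "valid_profile U T g" using bne by (simp add: is_BNE_def)
  define rho where "rho = (\<lambda>j t k. bind_pmf (Fsel init W f U T iota1 iota j (g j) t k) (g j t))"
  let ?s = "sig init W f U T iota1 iota g"
  have kr: "kinduced iota1 iota rho = ?s"
    by (simp add: kinduced_def rho_def sig_def fun_eq_iff)
  have vr: "valid_kprofile U T rho"
    using vg unfolding valid_kprofile_def valid_profile_def valid_strat_def rho_def by fastforce
  have pay: "payoff init W f T ?s m = payoff init W f T g m" for m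
    using payoff_multi[OF usi vg, of UNIV m] by simp
  have vs: "valid_profile U T ?s"
  proof -
    have "valid_strat U T j (?s j)" for j by (rule valid_sig[OF vg])
    then show ?thesis unfolding valid_profile_def by blast
  qed
  have "is_BNE init W f U T ?s"
    unfolding is_BNE_def
  proof (intro conjI allI impI vs)
    fix i and s :: "('h,'u,'y) bstrat" assume vsi: "valid_strat U T i s"
    define p where "p = g(i := s)"
    have vp: "valid_profile U T p" using vg vsi by (simp add: p_def valid_profile_def)
    have "?s(i := s) = (\<lambda>j. if j \<in> UNIV - {i} then sig init W f U T iota1 iota p j else p j)"
      by (auto simp: fun_eq_iff p_def sig_def)
    then have "payoff init W f T (?s(i := s)) i = payoff init W f T p i"
      using payoff_multi[OF usi vp, of "UNIV - {i}" i] by simp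
    also have "\<dots> \<le> payoff init W f T g i" using bne vsi by (simp add: is_BNE_def p_def)
    also have "\<dots> = payoff init W f T ?s i" using pay by simp
    finally show "payoff init W f T (?s(i := s)) i \<le> payoff init W f T ?s i" .
  qed
  moreover have "v = (\<lambda>i. payoff init W f T (kinduced iota1 iota rho) i)"
    using v pay kr by simp
  ultimately have "v = (\<lambda>i. payoff init W f T (kinduced iota1 iota rho) i) \<and> valid_kprofile U T rho
      \<and> is_BNE init W f U T (kinduced iota1 iota rho)"
    using vr kr by simp
  then show "v \<in> {(\<lambda>i. payoff init W f T (kinduced iota1 iota rho) i) | rho.
            valid_kprofile U T rho \<and> is_BNE init W f U T (kinduced iota1 iota rho)}"
    by blast
qed

end
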